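(* Let $\xi$ be a DoS sequence that is not an edge case, and let $\hat{B}_d(t)$ and $\hat{B}_f(t)$ be generated by the DoS estimator with parameters $2\leqslant \ell\in\mathbb{N}_+$, $0<\epsilon_0<1$, $0<\theta<1$. Then there exists a finite $T\geqslant 0$ such that $\hat{B}_d(t)\in\mathcal{D}(\xi)$ and $\hat{B}_f(t)\in\mathcal{F}(\xi)$ for all $t\geqslant T$.
   Context: A DoS sequence $\xi=\{H_n\}$ is a finite or infinite sequence of sets $H_n := \{h_n\}\cup[h_n,h_n+\tau_n)$, where $h_1\geqslant 0$, $\tau_n\geqslant 0$ and $h_{n+1} > h_n+\tau_n$ for all $n$. If $\xi$ has only $m$ elements, the convention $h_{n}=h_{n}+\tau_{n}=+\infty$ for $n>m$ is used. For $0\leqslant \tau\leqslant s$ let $\Xi(\tau,s) := \bigcup_n H_n\cap[\tau,s]$ and $n_\xi(\tau,s) := \operatorname{card}(\{h_n\}_n\cap[\tau,s])$; $\lvert\cdot\rvert$ denotes Lebesgue measure. A constant $B_d\in[0,1]$ is a duration-bound of $\xi$ if there is a constant $0<\kappa<+\infty$ with $\lvert \Xi(0,t)\rvert\leqslant \kappa + B_d t$ for all $t\geqslant 0$. A constant $B_f\in[0,+\infty)$ is a frequency-bound of $\xi$ if there is an integer $0<\Lambda<+\infty$ with $n_\xi(0,t)\leqslant \Lambda + B_f t$ for all $t\geqslant 0$; if no such finite $B_f$ exists, the frequency-bound is defined to be $+\infty$. $\mathcal{D}(\xi)$ and $\mathcal{F}(\xi)$ denote the sets of all duration-bounds and frequency-bounds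 of $\xi$. $\xi$ is an edge case if (i) $\inf\mathcal{D}(\xi)=1$, or (ii) $\inf\mathcal{F}(\xi)=+\infty$, or (iii) for every $\Gamma\in(0,+\infty)$ there is $n$ with $\tau_n>\Gamma$. DoS estimator: with $B_d(i) := \frac{\lvert \Xi(0,h_i+\tau_i)\rvert}{h_i+\tau_i}$ and $B_f(i) := \frac{i}{h_i}$, $\hat B_d(t) = \epsilon_0$ for $t\in[0,h_\ell+\tau_\ell)$ and $\hat B_d(t) = \max_{\ell\leqslant i\leqslant n}\{\epsilon_0,\ \theta B_d(i)+(1-\theta)\}$ for $t\in[h_n+\tau_n, h_{n+1}+\tau_{n+1})$, $n\geqslant \ell$; $\hat B_f(t) = \epsilon_0$ for $t\in[0,h_\ell)$ and $\hat B_f(t) = \max_{\ell\leqslant i\leqslant n}\{\epsilon_0,\ B_f(i)/\theta\}$ for $t\in[h_n,h_{n+1})$, $n\geqslant\ell$. *)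

theory Defs
  imports "HOL-Analysis.Analysis" "HOL-Library.Extended_Nat"
begin

text \<open>A DoS sequence is given by h, tau :: nat => real (indices start at 1)
  and a length N :: enat (N = infinity for an infinite sequence).
  Index n is valid iff 1 <= n <= N.\<close>

definition valid_idx :: "enat \<Rightarrow> nat \<Rightarrow> bool" where
  "valid_idx N n \<longleftrightarrow> 1 \<le> n \<and> enat n \<le> N"

definition dos_seq :: "(nat \<Rightarrow> real) \<Rightarrow> (nat \<Rightarrow> real) \<Rightarrow> enat \<Rightarrow> bool" where
  "dos_seq h \<tau> N \<longleftrightarrow>
     (valid_idx N 1 \<longrightarrow> 0 \<le> h 1) \<and>
     (\<forall>n. valid_idx N n \<longrightarrow> 0 \<le> \<tau> n) \<and>
     (\<forall>n. valid_idx N n \<and> valid_idx N (Suc n) \<longrightarrow> h (Suc n) > h n + \<tau> n)"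

definition Xi :: "(nat \<Rightarrow> real) \<Rightarrow> (nat \<Rightarrow> real) \<Rightarrow> enat \<Rightarrow> real \<Rightarrow> real \<Rightarrow> real set" where
  "Xi h \<tau> N a b = (\<Union>n\<in>{n. valid_idx N n}. insert (h n) {h n..<h n + \<tau> n}) \<inter> {a..b}"

definition n_xi :: "(nat \<Rightarrow> real) \<Rightarrow> enat \<Rightarrow> real \<Rightarrow> real \<Rightarrow> ereal" where
  "n_xi h N a b = (let S = (h ` {n. valid_idx N n}) \<inter> {a..b} in
                    if finite S then ereal (real (card S)) else \<infinity>)"

definition dur_bounds :: "(nat \<Rightarrow> real) \<Rightarrow> (nat \<Rightarrow> real) \<Rightarrow> enat \<Rightarrow> real set" where
  "dur_bounds h \<tau> N = {Bd. 0 \<le> Bd \<and> Bd \<le> 1 \<and>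
     (\<exists>\<kappa>::real. 0 < \<kappa> \<and> (\<forall>t\<ge>0. measure lborel (Xi h \<tau> N 0 t) \<le> \<kappa> + Bd * t))}"

text \<open>Finite frequency bounds; the paper's convention "frequency-bound = +infinity"
  corresponds to this set being empty (its ereal infimum is then infinity).\<close>
definition freq_bounds :: "(nat \<Rightarrow> real) \<Rightarrow> enat \<Rightarrow> real set" where
  "freq_bounds h N = {Bf. 0 \<le> Bf \<and>
     (\<exists>\<Lambda>::nat. 0 < \<Lambda> \<and> (\<forall>t\<ge>0. n_xi h N 0 t \<le> ereal (real \<Lambda> + Bf * t)))}"

definition edge_case :: "(nat \<Rightarrow> real) \<Rightarrow> (nat \<Rightarrow> real) \<Rightarrow> enat \<Rightarrow> bool" where
  "edge_case h \<tau> N \<longleftrightarrow>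
     Inf (dur_bounds h \<tau> N) = 1 \<or>
     Inf (ereal ` freq_bounds h N) = \<infinity> \<or>
     (\<forall>\<Gamma>::real. 0 < \<Gamma> \<longrightarrow> (\<exists>n. valid_idx N n \<and> \<tau> n > \<Gamma>))"

definition ext_h :: "(nat \<Rightarrow> real) \<Rightarrow> enat \<Rightarrow> nat \<Rightarrow> ereal" where
  "ext_h h N n = (if valid_idx N n then ereal (h n) else \<infinity>)"

definition ext_end :: "(nat \<Rightarrow> real) \<Rightarrow> (nat \<Rightarrow> real) \<Rightarrow> enat \<Rightarrow> nat \<Rightarrow> ereal" where
  "ext_end h \<tau> N n = (if valid_idx N n then ereal (h n + \<tau> n) else \<infinity>)"

definition Bd_i :: "(nat \<Rightarrow> real) \<Rightarrow> (nat \<Rightarrow> real) \<Rightarrow> enat \<Rightarrow> nat \<Rightarrow> real" where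
  "Bd_i h \<tau> N i = measure lborel (Xi h \<tau> N 0 (h i + \<tau> i)) / (h i + \<tau> i)"

definition Bf_i :: "(nat \<Rightarrow> real) \<Rightarrow> nat \<Rightarrow> real" where
  "Bf_i h i = real i / h i"

definition Bd_hat :: "(nat \<Rightarrow> real) \<Rightarrow> (nat \<Rightarrow> real) \<Rightarrow> enat \<Rightarrow> nat \<Rightarrow> real \<Rightarrow> real \<Rightarrow> real \<Rightarrow> real" where
  "Bd_hat h \<tau> N l \<epsilon>0 \<theta> t =
     (if ereal t < ext_end h \<tau> N l then \<epsilon>0
      else (let n = (THE n. l \<le> n \<and> ext_end h \<tau> N n \<le> ereal t \<and> ereal t < ext_end h \<tau> N (Suc n))
            in Max ({\<epsilon>0} \<union> (\<lambda>i. \<theta> * Bd_i h \<tau> N i + (1 - \<theta>)) ` {l..n})))"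

definition Bf_hat :: "(nat \<Rightarrow> real) \<Rightarrow> enat \<Rightarrow> nat \<Rightarrow> real \<Rightarrow> real \<Rightarrow> real \<Rightarrow> real" where
  "Bf_hat h N l \<epsilon>0 \<theta> t =
     (if ereal t < ext_h h N l then \<epsilon>0
      else (let n = (THE n. l \<le> n \<and> ext_h h N n \<le> ereal t \<and> ereal t < ext_h h N (Suc n))
            in Max ({\<epsilon>0} \<union> (\<lambda>i. Bf_i h i / \<theta>) ` {l..n})))"

end

theory Submission
  imports Defs
begin

lemma valid_idx_mono: "valid_idx N j \<Longrightarrow> 1 \<le> i \<Longrightarrow> i \<le> j \<Longrightarrow> valid_idx N i"
  unfolding valid_idx_def using order_trans[of "enat i" "enat j" N] by auto

lemma dos_gap:
  assumes d: "dos_seq h \<tau> N" and v: "valid_idx N j" and "1 \<le> i" "i < j"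
  shows "h i + \<tau> i < h j"
proof -
  have "valid_idx N (i + Suc k) \<longrightarrow> h i + \<tau> i < h (i + Suc k)" for k
  proof (induction k)
    case 0
    show ?case
    proof
      assume v: "valid_idx N (i + Suc 0)"
      have "valid_idx N i" using valid_idx_mono[OF v \<open>1 \<le> i\<close>] by simp
      then show "h i + \<tau> i < h (i + Suc 0)" using d v unfolding dos_seq_def by auto
    qed
  next
    case (Suc k)
    show ?case
    proof
      assume v: "valid_idx N (i + Suc (Suc k))"
      have v1: "valid_idx N (i + Suc k)" using valid_idx_mono[OF v, of "i + Suc k"] by simp
      have "h i + \<tau> i < h (i + Suc k)" using Suc v1 by auto
      also have "\<dots> \<le> h (i+Suc k) + \<tau> (i + Suc k)" using d v1 unfolding dos_seq_def by auto
      also have "\<dots> < h (Suc (i + Suc k))" using d v1 v unfolding dos_seq_def by auto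
      finally show "h i + \<tau> i < h (i + Suc (Suc k))" by simp
    qed
  qed
  moreover obtain k where "j = Suc (i + k)" using less_imp_Suc_add[OF \<open>i < j\<close>] by blast
  ultimately show ?thesis using v by simp
qed

lemma tau_nn: "dos_seq h \<tau> N \<Longrightarrow> valid_idx N n \<Longrightarrow> 0 \<le> \<tau> n"
  unfolding dos_seq_def by auto

lemma h_nn: assumes d: "dos_seq h \<tau> N" and v: "valid_idx N n" shows "0 \<le> h n"
proof (cases "n = 1")
  case True then show ?thesis using d v unfolding dos_seq_def by auto
next
  case False
  then have n: "1 < n" using v unfolding valid_idx_def by auto
  have v1: "valid_idx N 1" using valid_idx_mono[OF v, of 1] n by simp
  have "h 1 + \<tau> 1 < h n" using dos_gap[OF d v _ n] by simp
  moreover have "0 \<le> h 1" "0 \<le> \<tau> 1" using d v1 unfolding dos_seq_def by auto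
  ultimately show ?thesis by linarith
qed

lemma h_mono: assumes "dos_seq h \<tau> N" "valid_idx N j" "1 \<le> i" "i < j" shows "h i < h j"
proof -
  have "valid_idx N i" using valid_idx_mono[OF assms(2,3)] assms(4) by simp
  then have "0 \<le> \<tau> i" using tau_nn[OF assms(1)] by blast
  then show ?thesis using dos_gap[OF assms] by linarith
qed

lemma e_mono: assumes "dos_seq h \<tau> N" "valid_idx N j" "1 \<le> i" "i < j" shows "h i + \<tau> i < h j + \<tau> j"
proof -
  have "0 \<le> \<tau> j" using tau_nn[OF assms(1,2)] .
  then show ?thesis using dos_gap[OF assms] by linarith
qed

lemma e_pos: assumes "dos_seq h \<tau> N" "valid_idx N i" "2 \<le> i" shows "0 < h i + \<tau> i"
proof -
  have "valid_idx N 1" using valid_idx_mono[OF assms(2), of 1] assms(3) by simp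
  then have "0 \<le> h 1 + \<tau> 1" using h_nn[OF assms(1)] tau_nn[OF assms(1)] by (simp add: add_nonneg_nonneg)
  then show ?thesis using e_mono[OF assms(1,2), of 1] assms(3) by simp
qed

lemma Xi_sets: "Xi h \<tau> N a b \<in> sets lborel"
proof -
  have "insert (h n) {h n..<h n + \<tau> n} \<in> sets lborel" for n
    by (rule sets.insert_in_sets) (simp_all add: atLeastLessThan_borel)
  then have "(\<Union>n\<in>{n. valid_idx N n}. insert (h n) {h n..<h n + \<tau> n}) \<in> sets lborel"
    by (intro sets.countable_UN') auto
  then show ?thesis unfolding Xi_def by (intro sets.Int) auto
qed

lemma Xi_sub: "Xi h \<tau> N a b \<subseteq> {a..b}" unfolding Xi_def by auto

lemma Icc_fm: "{a..b::real} \<in> fmeasurable lborel"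
  by (rule fmeasurableI) (auto simp: emeasure_lborel_Icc_eq)

lemma Icc_meas: "a \<le> b \<Longrightarrow> measure lborel {a..b::real} = b - a"
  unfolding measure_def by (simp add: emeasure_lborel_Icc_eq)

lemma Xi_le: "a \<le> b \<Longrightarrow> measure lborel (Xi h \<tau> N a b) \<le> b - a"
  using measure_mono_fmeasurable[OF Xi_sub Xi_sets Icc_fm, of h \<tau> N a b] Icc_meas[of a b] by linarith

lemma Xi_fm: "Xi h \<tau> N a b \<in> fmeasurable lborel"
  by (rule fmeasurableI2[OF Icc_fm Xi_sub Xi_sets])

lemma Xi_mono: "Xi h \<tau> N a b \<subseteq> Xi h \<tau> N a c \<Longrightarrow> measure lborel (Xi h \<tau> N a b) \<le> measure lborel (Xi h \<tau> N a c)"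
  by (rule measure_mono_fmeasurable[OF _ Xi_sets Xi_fm])


lemma Xi_sub_end:
  assumes d: "dos_seq h \<tau> N" and vi: "valid_idx N i"
    and nS: "\<not> (valid_idx N (Suc i) \<and> h (Suc i) \<le> t)"
  shows "Xi h \<tau> N 0 t \<subseteq> Xi h \<tau> N 0 (h i + \<tau> i)"
proof
  fix x assume "x \<in> Xi h \<tau> N 0 t"
  then obtain n where vn: "valid_idx N n" and xH: "x \<in> insert (h n) {h n..<h n + \<tau> n}"
    and x0: "0 \<le> x" and xt: "x \<le> t" unfolding Xi_def by auto
  have tn: "0 \<le> \<tau> n" using tau_nn[OF d vn] .
  have xe: "h n \<le> x" "x \<le> h n + \<tau> n" using xH tn by auto
  have i1: "1 \<le> i" using vi unfolding valid_idx_def by simp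
  have "x \<le> h i + \<tau> i"
  proof (cases "n \<le> i")
    case True
    show ?thesis
    proof (cases "n = i")
      case True then show ?thesis using xe by simp
    next
      case False
      then have "n < i" using \<open>n \<le> i\<close> by simp
      moreover have "1 \<le> n" using vn unfolding valid_idx_def by simp
      ultimately have "h n + \<tau> n < h i" using dos_gap[OF d vi] by blast
      then show ?thesis using xe tau_nn[OF d vi] by linarith
    qed
  next
    case False
    then have vS: "valid_idx N (Suc i)" using valid_idx_mono[OF vn, of "Suc i"] by simp
    have "h (Suc i) \<le> h n"
    proof (cases "Suc i = n")
      case True then show ?thesis by simp
    next
      case False
      then have "Suc i < n" using \<open>\<not> n \<le> i\<close> by simp
      then show ?thesis using h_mono[OF d vn, of "Suc i"] by simp
    qed
    then have "h (Suc i) \<le> t" using xe xt by linarith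
    then show ?thesis using nS vS by blast
  qed
  then show "x \<in> Xi h \<tau> N 0 (h i + \<tau> i)" using vn xH x0 unfolding Xi_def by auto
qed

lemma Xi_small:
  assumes d: "dos_seq h \<tau> N" and small: "\<And>n. valid_idx N n \<Longrightarrow> h n \<le> t \<Longrightarrow> n < L"
  shows "Xi h \<tau> N 0 t \<subseteq> {0..Max (insert 0 ((\<lambda>n. h n + \<tau> n) ` {1..<L}))}"
proof
  fix x assume "x \<in> Xi h \<tau> N 0 t"
  then obtain n where vn: "valid_idx N n" and xH: "x \<in> insert (h n) {h n..<h n + \<tau> n}"
    and x0: "0 \<le> x" and xt: "x \<le> t" unfolding Xi_def by auto
  have tn: "0 \<le> \<tau> n" using tau_nn[OF d vn] .
  have xe: "h n \<le> x" "x \<le> h n + \<tau> n" using xH tn by auto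
  have "n < L" using small[OF vn] xe xt by linarith
  moreover have "1 \<le> n" using vn unfolding valid_idx_def by simp
  ultimately have "h n + \<tau> n \<le> Max (insert 0 ((\<lambda>n. h n + \<tau> n) ` {1..<L}))"
    by (intro Max_ge) auto
  then show "x \<in> {0..Max (insert 0 ((\<lambda>n. h n + \<tau> n) ` {1..<L}))}" using x0 xe by auto
qed

lemma nxi_le_card:
  assumes d: "dos_seq h \<tau> N" and fin: "finite {n. valid_idx N n \<and> h n \<le> t}"
  shows "n_xi h N 0 t \<le> ereal (real (card {n. valid_idx N n \<and> h n \<le> t}))"
proof -
  let ?K = "{n. valid_idx N n \<and> h n \<le> t}"
  let ?S = "(h ` {n. valid_idx N n}) \<inter> {0..t}"
  have sub: "?S \<subseteq> h ` ?K" by auto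
  have fS: "finite ?S" using finite_subset[OF sub] fin by blast
  have "card ?S \<le> card (h ` ?K)" using card_mono[OF _ sub] fin by blast
  also have "\<dots> \<le> card ?K" by (rule card_image_le[OF fin])
  finally show ?thesis unfolding n_xi_def Let_def using fS by simp
qed

lemma nxi_ge:
  assumes d: "dos_seq h \<tau> N" and vi: "valid_idx N i" and le: "n_xi h N 0 (h i) \<le> ereal X"
  shows "real i \<le> X"
proof -
  let ?S = "(h ` {n. valid_idx N n}) \<inter> {0..h i}"
  have sub: "h ` {1..i} \<subseteq> ?S"
  proof
    fix y assume "y \<in> h ` {1..i}"
    then obtain j where j: "1 \<le> j" "j \<le> i" "y = h j" by auto
    have vj: "valid_idx N j" using valid_idx_mono[OF vi j(1,2)] .
    have "h j \<le> h i"
    proof (cases "j = i")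
      case False then show ?thesis using h_mono[OF d vi j(1)] j(2) by simp
    qed simp
    then show "y \<in> ?S" using j vj h_nn[OF d vj] by auto
  qed
  have fS: "finite ?S"
  proof (rule ccontr)
    assume "\<not> finite ?S"
    then have "n_xi h N 0 (h i) = \<infinity>" unfolding n_xi_def Let_def by simp
    then show False using le by simp
  qed
  have inj: "inj_on h {1..i}"
  proof (rule inj_onI)
    fix x y assume x: "x \<in> {1..i}" and y: "y \<in> {1..i}" and e: "h x = h y"
    show "x = y"
    proof (rule ccontr)
      assume "x \<noteq> y"
      then consider "x < y" | "y < x" by linarith
      then show False
      proof cases
        case 1
        have "valid_idx N y" using valid_idx_mono[OF vi] y by auto
        then show False using h_mono[OF d _ _ 1] x e by auto
      next
        case 2
        have "valid_idx N x" using valid_idx_mono[OF vi] x by auto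
        then show False using h_mono[OF d _ _ 2] y e by auto
      qed
    qed
  qed
  have "i = card (h ` {1..i})" using card_image[OF inj] by simp
  also have "\<dots> \<le> card ?S" using card_mono[OF fS sub] .
  finally have "real i \<le> real (card ?S)" by simp
  moreover have "n_xi h N 0 (h i) = ereal (real (card ?S))" unfolding n_xi_def Let_def using fS by simp
  ultimately show ?thesis using le by simp
qed

lemma K_finite:
  assumes d: "dos_seq h \<tau> N" and B: "\<And>t. 0 \<le> t \<Longrightarrow> n_xi h N 0 t \<le> ereal (real \<Lambda> + Bf * t)"
    and B0: "0 \<le> Bf"
  shows "finite {n. valid_idx N n \<and> h n \<le> t}"
proof (rule finite_subset)
  show "{n. valid_idx N n \<and> h n \<le> t} \<subseteq> {..nat \<lceil>real \<Lambda> + Bf * t\<rceil>}"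
  proof
    fix n assume "n \<in> {n. valid_idx N n \<and> h n \<le> t}"
    then have vn: "valid_idx N n" and hn: "h n \<le> t" by auto
    have h0: "0 \<le> h n" using h_nn[OF d vn] .
    have "real n \<le> real \<Lambda> + Bf * h n" using nxi_ge[OF d vn B[OF h0]] .
    also have "\<dots> \<le> real \<Lambda> + Bf * t" using B0 hn by (simp add: mult_left_mono)
    finally have "real n \<le> real \<Lambda> + Bf * t" .
    then have "real n \<le> real_of_int \<lceil>real \<Lambda> + Bf * t\<rceil>" by linarith
    then have "int n \<le> \<lceil>real \<Lambda> + Bf * t\<rceil>" by linarith
    then show "n \<in> {..nat \<lceil>real \<Lambda> + Bf * t\<rceil>}" by simp
  qed
qed simp

lemma the_idx:
  fixes g :: "nat \<Rightarrow> real" and E :: "nat \<Rightarrow> ereal"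
  assumes mono: "\<And>i j. valid_idx N j \<Longrightarrow> 1 \<le> i \<Longrightarrow> i < j \<Longrightarrow> g i < g j"
    and fin: "finite {n. valid_idx N n \<and> g n \<le> t}"
    and vi: "valid_idx N i" and li: "l \<le> i" and gi: "g i \<le> t"
    and E: "\<And>n. E n = (if valid_idx N n then ereal (g n) else \<infinity>)"
  shows "\<exists>k. (THE n. l \<le> n \<and> E n \<le> ereal t \<and> ereal t < E (Suc n)) = k \<and> i \<le> k \<and> valid_idx N k"
proof -
  let ?K = "{n. valid_idx N n \<and> g n \<le> t}"
  define k where "k = Max ?K"
  have iK: "i \<in> ?K" using vi gi by simp
  have kK: "k \<in> ?K" unfolding k_def using fin iK Max_in by blast
  have ik: "i \<le> k" unfolding k_def using fin iK Max_ge by blast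
  have vk: "valid_idx N k" "g k \<le> t" using kK by auto
  have nS: "\<not> (valid_idx N (Suc k) \<and> g (Suc k) \<le> t)"
  proof
    assume "valid_idx N (Suc k) \<and> g (Suc k) \<le> t"
    then have "Suc k \<in> ?K" by simp
    then have "Suc k \<le> k" unfolding k_def using fin Max_ge by blast
    then show False by simp
  qed
  let ?P = "\<lambda>n. l \<le> n \<and> E n \<le> ereal t \<and> ereal t < E (Suc n)"
  have Pk: "?P k" using li ik vk nS E[of k] E[of "Suc k"] by auto
  have uniq: "n = k" if Pn: "?P n" for n
  proof (rule ccontr)
    assume "n \<noteq> k"
    then consider "n < k" | "k < n" by linarith
    then show False
    proof cases
      case 1
      have vS: "valid_idx N (Suc n)" using valid_idx_mono[OF vk(1), of "Suc n"] 1 by simp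
      have "g (Suc n) \<le> g k"
      proof (cases "Suc n = k")
        case False then show ?thesis using mono[OF vk(1), of "Suc n"] 1 by simp
      qed simp
      then have "E (Suc n) \<le> ereal t" using vS E[of "Suc n"] vk(2) by simp
      then show False using Pn not_le by blast
    next
      case 2
      have vn: "valid_idx N n" using Pn E[of n] by (cases "valid_idx N n") auto
      have gn: "g n \<le> t" using Pn E[of n] vn by simp
      have vS: "valid_idx N (Suc k)" using valid_idx_mono[OF vn, of "Suc k"] 2 by simp
      have "g (Suc k) \<le> g n"
      proof (cases "Suc k = n")
        case False then show ?thesis using mono[OF vn, of "Suc k"] 2 by simp
      qed simp
      then show False using nS vS gn by simp
    qed
  qed
  have "(THE n. ?P n) = k" using Pk uniq by (rule the_equality)
  then show ?thesis using ik vk by blast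
qed


lemma Bd_hat_val:
  assumes d: "dos_seq h \<tau> N" and fin: "finite {n. valid_idx N n \<and> h n + \<tau> n \<le> t}"
    and vi: "valid_idx N i" and li: "l \<le> i" and ei: "h i + \<tau> i \<le> t" and l1: "1 \<le> l"
  shows "\<exists>k. i \<le> k \<and> valid_idx N k \<and>
     Bd_hat h \<tau> N l \<epsilon>0 \<theta> t = Max ({\<epsilon>0} \<union> (\<lambda>i. \<theta> * Bd_i h \<tau> N i + (1 - \<theta>)) ` {l..k})"
proof -
  have vl: "valid_idx N l" using valid_idx_mono[OF vi l1 li] .
  have "h l + \<tau> l \<le> h i + \<tau> i"
  proof (cases "l = i")
    case False then show ?thesis using e_mono[OF d vi l1] li by simp
  qed simp
  then have nlt: "\<not> ereal t < ext_end h \<tau> N l" using vl ei by (simp add: ext_end_def)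
  have "\<exists>k. (THE n. l \<le> n \<and> ext_end h \<tau> N n \<le> ereal t \<and> ereal t < ext_end h \<tau> N (Suc n)) = k \<and> i \<le> k \<and> valid_idx N k"
    apply (rule the_idx[of N "\<lambda>n. h n + \<tau> n" t i l])
    using e_mono[OF d] fin vi li ei by (auto simp: ext_end_def)
  then obtain k where k: "(THE n. l \<le> n \<and> ext_end h \<tau> N n \<le> ereal t \<and> ereal t < ext_end h \<tau> N (Suc n)) = k" "i \<le> k" "valid_idx N k"
    by blast
  show ?thesis using k nlt unfolding Bd_hat_def by (auto simp: Let_def)
qed

lemma Bf_hat_val:
  assumes d: "dos_seq h \<tau> N" and fin: "finite {n. valid_idx N n \<and> h n \<le> t}"
    and vi: "valid_idx N i" and li: "l \<le> i" and ei: "h i \<le> t" and l1: "1 \<le> l"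
  shows "\<exists>k. i \<le> k \<and> valid_idx N k \<and>
     Bf_hat h N l \<epsilon>0 \<theta> t = Max ({\<epsilon>0} \<union> (\<lambda>i. Bf_i h i / \<theta>) ` {l..k})"
proof -
  have vl: "valid_idx N l" using valid_idx_mono[OF vi l1 li] .
  have "h l \<le> h i"
  proof (cases "l = i")
    case False then show ?thesis using h_mono[OF d vi l1] li by simp
  qed simp
  then have nlt: "\<not> ereal t < ext_h h N l" using vl ei by (simp add: ext_h_def)
  have "\<exists>k. (THE n. l \<le> n \<and> ext_h h N n \<le> ereal t \<and> ereal t < ext_h h N (Suc n)) = k \<and> i \<le> k \<and> valid_idx N k"
    apply (rule the_idx[of N h t i l])
    using h_mono[OF d] fin vi li ei by (auto simp: ext_h_def)
  then obtain k where k: "(THE n. l \<le> n \<and> ext_h h N n \<le> ereal t \<and> ereal t < ext_h h N (Suc n)) = k" "i \<le> k" "valid_idx N k"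
    by blast
  show ?thesis using k nlt unfolding Bf_hat_def by (auto simp: Let_def)
qed

lemma D_up: assumes "y \<in> dur_bounds h \<tau> N" "y \<le> x" "x \<le> 1" shows "x \<in> dur_bounds h \<tau> N"
proof -
  obtain \<kappa> where y0: "0 \<le> y" and k0: "0 < \<kappa>" and b: "\<forall>t\<ge>0. measure lborel (Xi h \<tau> N 0 t) \<le> \<kappa> + y * t"
    using assms(1) unfolding dur_bounds_def by blast
  have "\<forall>t\<ge>0. measure lborel (Xi h \<tau> N 0 t) \<le> \<kappa> + x * t"
  proof (intro allI impI)
    fix t :: real assume "0 \<le> t"
    then have "y * t \<le> x * t" using assms(2) by (simp add: mult_right_mono)
    then show "measure lborel (Xi h \<tau> N 0 t) \<le> \<kappa> + x * t" using b \<open>0 \<le> t\<close> by force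
  qed
  then show ?thesis unfolding dur_bounds_def using y0 k0 assms(2,3) by auto
qed

lemma F_up: assumes "y \<in> freq_bounds h N" "y \<le> x" shows "x \<in> freq_bounds h N"
proof -
  obtain \<Lambda> :: nat where y0: "0 \<le> y" and k0: "0 < \<Lambda>" and b: "\<forall>t\<ge>0. n_xi h N 0 t \<le> ereal (real \<Lambda> + y * t)"
    using assms(1) unfolding freq_bounds_def by blast
  have "\<forall>t\<ge>0. n_xi h N 0 t \<le> ereal (real \<Lambda> + x * t)"
  proof (intro allI impI)
    fix t :: real assume "0 \<le> t"
    then have "y * t \<le> x * t" using assms(2) by (simp add: mult_right_mono)
    then have "ereal (real \<Lambda> + y * t) \<le> ereal (real \<Lambda> + x * t)" by simp
    then show "n_xi h N 0 t \<le> ereal (real \<Lambda> + x * t)" using b \<open>0 \<le> t\<close> order_trans by blast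
  qed
  then show ?thesis unfolding freq_bounds_def using y0 k0 assms(2) by auto
qed


theorem theorem1:
  fixes h \<tau> :: "nat \<Rightarrow> real" and N :: enat and l :: nat and \<epsilon>0 \<theta> :: real
  assumes "dos_seq h \<tau> N"
    and "\<not> edge_case h \<tau> N"
    and "2 \<le> l"
    and "0 < \<epsilon>0" and "\<epsilon>0 < 1"
    and "0 < \<theta>" and "\<theta> < 1"
  shows "\<exists>T\<ge>0. \<forall>t\<ge>T. Bd_hat h \<tau> N l \<epsilon>0 \<theta> t \<in> dur_bounds h \<tau> N
                      \<and> Bf_hat h N l \<epsilon>0 \<theta> t \<in> freq_bounds h N"
proof -
  note d = assms(1)
  have l1: "1 \<le> l" using assms(3) by simp
  from assms(2) have nd: "Inf (dur_bounds h \<tau> N) \<noteq> 1" and nf: "Inf (ereal ` freq_bounds h N) \<noteq> \<infinity>"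
    and ng: "\<not> (\<forall>\<Gamma>::real. 0 < \<Gamma> \<longrightarrow> (\<exists>n. valid_idx N n \<and> \<tau> n > \<Gamma>))"
    unfolding edge_case_def by auto
  obtain \<Gamma> :: real where G0: "0 < \<Gamma>" and G: "\<And>n. valid_idx N n \<Longrightarrow> \<tau> n \<le> \<Gamma>"
    using ng by (auto simp: not_less)
  define D where "D = dur_bounds h \<tau> N"
  define F where "F = freq_bounds h N"
  have Fne: "F \<noteq> {}"
  proof
    assume "F = {}"
    then have "Inf (ereal ` freq_bounds h N) = \<infinity>" unfolding F_def by (simp add: top_ereal_def)
    then show False using nf by simp
  qed
  obtain B \<Lambda> where B0: "0 \<le> B" and B\<Lambda>: "\<And>t. 0 \<le> t \<Longrightarrow> n_xi h N 0 t \<le> ereal (real \<Lambda> + B * t)"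
    using Fne unfolding F_def freq_bounds_def by blast
  have finK: "\<And>t. finite {n. valid_idx N n \<and> h n \<le> t}" using K_finite[OF d B\<Lambda> B0] by blast
  have finE: "finite {n. valid_idx N n \<and> h n + \<tau> n \<le> t}" for t
  proof (rule finite_subset[OF _ finK[of t]])
    show "{n. valid_idx N n \<and> h n + \<tau> n \<le> t} \<subseteq> {n. valid_idx N n \<and> h n \<le> t}"
    proof
      fix n assume "n \<in> {n. valid_idx N n \<and> h n + \<tau> n \<le> t}"
      then have "valid_idx N n" "h n + \<tau> n \<le> t" by auto
      moreover have "0 \<le> \<tau> n" using tau_nn[OF d \<open>valid_idx N n\<close>] .
      ultimately show "n \<in> {n. valid_idx N n \<and> h n \<le> t}" by simp
    qed
  qed
  have oneD: "1 \<in> D"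
  proof -
    have "measure lborel (Xi h \<tau> N 0 t) \<le> 1 + 1 * t" if "0 \<le> t" for t
      using Xi_le[OF that, of h \<tau> N] by simp
    then show ?thesis unfolding D_def dur_bounds_def by (intro CollectI conjI exI[of _ 1]) auto
  qed
  have Dbdd: "bdd_below D" unfolding D_def dur_bounds_def by (rule bdd_belowI[of _ 0]) auto
  have Fbdd: "bdd_below F" unfolding F_def freq_bounds_def by (rule bdd_belowI[of _ 0]) auto
  have Dle1: "Inf D \<le> 1" using cInf_lower[OF oneD Dbdd] .
  have Dlt: "Inf D < 1" using Dle1 nd unfolding D_def by linarith
  show ?thesis
  proof (cases "valid_idx N l")
    case False
    have small: "n < l" if "valid_idx N n" "h n \<le> t" for n t
    proof (rule ccontr)
      assume "\<not> n < l"
      then have "l \<le> n" by simp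
      then show False using valid_idx_mono[OF that(1) l1] False by simp
    qed
    have bd: "Bd_hat h \<tau> N l \<epsilon>0 \<theta> t = \<epsilon>0" for t unfolding Bd_hat_def ext_end_def using False by simp
    have bf: "Bf_hat h N l \<epsilon>0 \<theta> t = \<epsilon>0" for t unfolding Bf_hat_def ext_h_def using False by simp
    define C where "C = Max (insert 0 ((\<lambda>n. h n + \<tau> n) ` {1..<l}))"
    have C0: "0 \<le> C" unfolding C_def by (intro Max_ge) auto
    have e0D: "\<epsilon>0 \<in> D"
    proof -
      have "measure lborel (Xi h \<tau> N 0 t) \<le> (C + 1) + \<epsilon>0 * t" if t0: "0 \<le> t" for t
      proof -
        have "measure lborel (Xi h \<tau> N 0 t) \<le> measure lborel {0..C}"
          using measure_mono_fmeasurable[OF Xi_small[OF d small] Xi_sets Icc_fm] unfolding C_def .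
        also have "\<dots> = C" using Icc_meas[OF C0] by simp
        finally have "measure lborel (Xi h \<tau> N 0 t) \<le> C" .
        moreover have "0 \<le> \<epsilon>0 * t" using assms(4) t0 by simp
        ultimately show ?thesis by linarith
      qed
      then show ?thesis unfolding D_def dur_bounds_def using assms(4,5) C0
        by (intro CollectI conjI exI[of _ "C+1"]) auto
    qed
    have e0F: "\<epsilon>0 \<in> F"
    proof -
      have "n_xi h N 0 t \<le> ereal (real l + \<epsilon>0 * t)" if t0: "0 \<le> t" for t
      proof -
        let ?K = "{n. valid_idx N n \<and> h n \<le> t}"
        have sub: "?K \<subseteq> {1..<l}"
        proof
          fix n assume "n \<in> ?K"
          then have "valid_idx N n" "h n \<le> t" by auto
          then show "n \<in> {1..<l}" using small[of n t] unfolding valid_idx_def by auto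
        qed
        have "card ?K \<le> card {1..<l}" using card_mono[OF _ sub] by simp
        then have "real (card ?K) \<le> real l" by simp
        moreover have "0 \<le> \<epsilon>0 * t" using assms(4) t0 by simp
        ultimately have "ereal (real (card ?K)) \<le> ereal (real l + \<epsilon>0 * t)" by simp
        then show ?thesis using nxi_le_card[OF d finK[of t]] by (rule order_trans[rotated])
      qed
      then show ?thesis unfolding F_def freq_bounds_def using assms(4) l1
        by (intro CollectI conjI exI[of _ l]) auto
    qed
    show ?thesis using bd bf e0D e0F unfolding D_def F_def by (intro exI[of _ 0]) auto
  next
    case True
    note vl = True
    have e_pos_i: "0 < h i + \<tau> i" if "valid_idx N i" "l \<le> i" for i
      using e_pos[OF d that(1)] that(2) assms(3) by simp
    have "\<exists>i. valid_idx N i \<and> l \<le> i \<and> Inf D < \<theta> * Bd_i h \<tau> N i + (1 - \<theta>)"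
    proof (rule ccontr)
      assume H: "\<not> ?thesis"
      have Hi: "\<theta> * Bd_i h \<tau> N i + (1 - \<theta>) \<le> Inf D" if "valid_idx N i" "l \<le> i" for i
        using H that not_less by blast
      define b where "b = (Inf D - 1 + \<theta>) / \<theta>"
      have Bb: "Bd_i h \<tau> N i \<le> b" if "valid_idx N i" "l \<le> i" for i
      proof -
        have "\<theta> * Bd_i h \<tau> N i \<le> Inf D - 1 + \<theta>" using Hi[OF that] by linarith
        then show ?thesis unfolding b_def using assms(6) by (simp add: pos_le_divide_eq mult.commute)
      qed
      have Bd0: "0 \<le> Bd_i h \<tau> N i" if "valid_idx N i" "l \<le> i" for i
        unfolding Bd_i_def using e_pos_i[OF that] by (simp add: divide_nonneg_pos)
      have b0: "0 \<le> b" using Bd0[OF vl order_refl] Bb[OF vl order_refl] by linarith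
      have b1: "b \<le> 1" unfolding b_def using assms(6) Dle1 by (simp add: pos_divide_le_eq)
      have bG: "0 \<le> b * \<Gamma>" using b0 G0 by simp
      define C where "C = Max (insert 0 ((\<lambda>n. h n + \<tau> n) ` {1..<l}))"
      have C0: "0 \<le> C" unfolding C_def by (intro Max_ge) auto
      have bD: "b \<in> D"
      proof -
        have "measure lborel (Xi h \<tau> N 0 t) \<le> (C + b * \<Gamma> + 1) + b * t" if t0: "0 \<le> t" for t
        proof (cases "\<exists>n. valid_idx N n \<and> h n \<le> t \<and> l \<le> n")
          case True
          then obtain n where n: "valid_idx N n" "h n \<le> t" "l \<le> n" by blast
          let ?K = "{n. valid_idx N n \<and> h n \<le> t}"
          define k where "k = Max ?K"
          have kK: "k \<in> ?K" unfolding k_def using n by (intro Max_in finK) auto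
          have nk: "n \<le> k" unfolding k_def using n by (intro Max_ge finK) auto
          have vk: "valid_idx N k" "h k \<le> t" using kK by auto
          have lk: "l \<le> k" using n nk by simp
          have nS: "\<not> (valid_idx N (Suc k) \<and> h (Suc k) \<le> t)"
          proof
            assume "valid_idx N (Suc k) \<and> h (Suc k) \<le> t"
            then have "Suc k \<le> k" unfolding k_def by (intro Max_ge finK) auto
            then show False by simp
          qed
          have ek: "0 < h k + \<tau> k" using e_pos_i[OF vk(1) lk] .
          have "measure lborel (Xi h \<tau> N 0 t) \<le> measure lborel (Xi h \<tau> N 0 (h k + \<tau> k))"
            using Xi_mono[OF Xi_sub_end[OF d vk(1) nS]] .
          also have "\<dots> = Bd_i h \<tau> N k * (h k + \<tau> k)" unfolding Bd_i_def using ek by simp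
          also have "\<dots> \<le> b * (h k + \<tau> k)" using Bb[OF vk(1) lk] ek by (simp add: mult_right_mono)
          also have "\<dots> \<le> b * (t + \<Gamma>)" using b0 vk(2) G[OF vk(1)] by (intro mult_left_mono) auto
          also have "\<dots> = b * t + b * \<Gamma>" by (simp add: distrib_left)
          finally show ?thesis using C0 by linarith
        next
          case False
          have small: "n < l" if "valid_idx N n" "h n \<le> t" for n
            using False that not_less by blast
          have "measure lborel (Xi h \<tau> N 0 t) \<le> measure lborel {0..C}"
            using measure_mono_fmeasurable[OF Xi_small[OF d small] Xi_sets Icc_fm] unfolding C_def .
          also have "\<dots> = C" using Icc_meas[OF C0] by simp
          finally have "measure lborel (Xi h \<tau> N 0 t) \<le> C" .
          moreover have "0 \<le> b * t" using b0 t0 by simp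
          ultimately show ?thesis using bG by linarith
        qed
        then show ?thesis unfolding D_def dur_bounds_def using b0 b1 C0 bG
          by (intro CollectI conjI exI[of _ "C + b * \<Gamma> + 1"]) auto
      qed
      have "Inf D \<le> b" using cInf_lower[OF bD Dbdd] .
      then have "Inf D * \<theta> \<le> Inf D - 1 + \<theta>" unfolding b_def using assms(6) by (simp add: pos_le_divide_eq)
      moreover have "(1 - \<theta>) * (Inf D - 1) = Inf D - 1 + \<theta> - Inf D * \<theta>" by (simp add: algebra_simps)
      moreover have "(1 - \<theta>) * (Inf D - 1) < 0" using assms(7) Dlt by (intro mult_pos_neg) auto
      ultimately show False by linarith
    qed
    then obtain i where vi: "valid_idx N i" and li: "l \<le> i" and gi: "Inf D < \<theta> * Bd_i h \<tau> N i + (1 - \<theta>)"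
      by blast
    have "\<exists>j. valid_idx N j \<and> l \<le> j \<and> (Inf F < \<epsilon>0 \<or> Inf F < Bf_i h j / \<theta>)"
    proof (rule ccontr)
      assume H: "\<not> ?thesis"
      have "\<not> (Inf F < \<epsilon>0 \<or> Inf F < Bf_i h l / \<theta>)" using H vl by blast
      then have e0F: "\<epsilon>0 \<le> Inf F" by simp
      define c where "c = \<theta> * Inf F"
      have c0: "0 < c" unfolding c_def using e0F assms(4,6) by simp
      have hpos: "0 < h j" if "valid_idx N j" "l \<le> j" for j
      proof -
        have v1: "valid_idx N 1" using valid_idx_mono[OF that(1), of 1] that(2) l1 by simp
        have "h 1 < h j" using h_mono[OF d that(1), of 1] that(2) assms(3) by simp
        then show ?thesis using h_nn[OF d v1] by linarith
      qed
      have jc: "real j \<le> c * h j" if "valid_idx N j" "l \<le> j" for j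
      proof -
        have "\<not> (Inf F < Bf_i h j / \<theta>)" using H that by blast
        then have "Bf_i h j / \<theta> \<le> Inf F" by simp
        then have "Bf_i h j \<le> c" unfolding c_def using assms(6) by (simp add: pos_divide_le_eq mult.commute)
        then have "real j / h j \<le> c" unfolding Bf_i_def .
        then show ?thesis using hpos[OF that] by (simp add: pos_divide_le_eq mult.commute)
      qed
      have cF: "c \<in> F"
      proof -
        have "n_xi h N 0 t \<le> ereal (real l + c * t)" if t0: "0 \<le> t" for t
        proof -
          let ?K = "{n. valid_idx N n \<and> h n \<le> t}"
          have ct: "0 \<le> c * t" using c0 t0 by simp
          have "real (card ?K) \<le> real l + c * t"
          proof (cases "\<exists>n. valid_idx N n \<and> h n \<le> t \<and> l \<le> n")
            case True
            then obtain n where n: "valid_idx N n" "h n \<le> t" "l \<le> n" by blast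
            define k where "k = Max ?K"
            have kK: "k \<in> ?K" unfolding k_def using n by (intro Max_in finK) auto
            have nk: "n \<le> k" unfolding k_def using n by (intro Max_ge finK) auto
            have vk: "valid_idx N k" "h k \<le> t" using kK by auto
            have lk: "l \<le> k" using n nk by simp
            have sub: "?K \<subseteq> {1..k}"
            proof
              fix m assume m: "m \<in> ?K"
              then have "m \<le> k" unfolding k_def by (intro Max_ge finK) auto
              moreover have "1 \<le> m" using m unfolding valid_idx_def by auto
              ultimately show "m \<in> {1..k}" by simp
            qed
            have "card ?K \<le> k" using card_mono[OF _ sub] by simp
            then have "real (card ?K) \<le> real k" by simp
            also have "\<dots> \<le> c * h k" using jc[OF vk(1) lk] .
            also have "\<dots> \<le> c * t" using vk(2) c0 by (simp add: mult_left_mono)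
            finally show ?thesis by simp
          next
            case False
            have sub: "?K \<subseteq> {1..<l}"
            proof
              fix m assume m: "m \<in> ?K"
              then have "valid_idx N m" "h m \<le> t" by auto
              then have "m < l" using False not_less by blast
              moreover have "1 \<le> m" using m unfolding valid_idx_def by auto
              ultimately show "m \<in> {1..<l}" by simp
            qed
            have "card ?K \<le> card {1..<l}" using card_mono[OF _ sub] by simp
            then have "real (card ?K) \<le> real l" by simp
            then show ?thesis using ct by linarith
          qed
          then have "ereal (real (card ?K)) \<le> ereal (real l + c * t)" by simp
          then show ?thesis using nxi_le_card[OF d finK[of t]] by (rule order_trans[rotated])
        qed
        then show ?thesis unfolding F_def freq_bounds_def using c0 l1
          by (intro CollectI conjI exI[of _ l]) auto
      qed
      have "Inf F \<le> c" using cInf_lower[OF cF Fbdd] .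
      then have "Inf F * (1 - \<theta>) \<le> 0" unfolding c_def by (simp add: algebra_simps)
      moreover have "0 < Inf F * (1 - \<theta>)" using e0F assms(4,7) by (intro mult_pos_pos) auto
      ultimately show False by linarith
    qed
    then obtain j where vj: "valid_idx N j" and lj: "l \<le> j" and gj: "Inf F < \<epsilon>0 \<or> Inf F < Bf_i h j / \<theta>"
      by blast
    define T where "T = max (h i + \<tau> i) (h j)"
    have T0: "0 \<le> T" using h_nn[OF d vj] unfolding T_def by simp
    show ?thesis
    proof (intro exI[of _ T] conjI[OF T0] allI impI)
      fix t assume tT: "T \<le> t"
      have eit: "h i + \<tau> i \<le> t" and hjt: "h j \<le> t" using tT unfolding T_def by auto
      obtain k where k: "i \<le> k" "valid_idx N k"
        and bdv: "Bd_hat h \<tau> N l \<epsilon>0 \<theta> t = Max ({\<epsilon>0} \<union> (\<lambda>i. \<theta> * Bd_i h \<tau> N i + (1 - \<theta>)) ` {l..k})"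
        using Bd_hat_val[OF d finE vi li eit l1] by blast
      let ?A = "{\<epsilon>0} \<union> (\<lambda>i. \<theta> * Bd_i h \<tau> N i + (1 - \<theta>)) ` {l..k}"
      have fA: "finite ?A" by simp
      have "\<theta> * Bd_i h \<tau> N i + (1 - \<theta>) \<le> Max ?A" using li k(1) by (intro Max_ge fA) auto
      then have gtA: "Inf D < Max ?A" using gi by linarith
      have le1: "Max ?A \<le> 1"
      proof (subst Max_le_iff[OF fA])
        show "?A \<noteq> {}" by simp
        show "\<forall>a\<in>?A. a \<le> 1"
        proof
          fix a assume "a \<in> ?A"
          then consider "a = \<epsilon>0" | m where "m \<in> {l..k}" "a = \<theta> * Bd_i h \<tau> N m + (1 - \<theta>)" by auto
          then show "a \<le> 1"
          proof cases
            case 1 then show ?thesis using assms(5) by simp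
          next
            case 2
            have vm: "valid_idx N m" using valid_idx_mono[OF k(2), of m] 2(1) l1 by auto
            have em: "0 < h m + \<tau> m" using e_pos_i[OF vm] 2(1) by simp
            have "measure lborel (Xi h \<tau> N 0 (h m + \<tau> m)) \<le> h m + \<tau> m - 0"
              using Xi_le[of 0 "h m + \<tau> m" h \<tau> N] em by simp
            then have "Bd_i h \<tau> N m \<le> 1" unfolding Bd_i_def using em by (simp add: pos_divide_le_eq)
            then have "\<theta> * Bd_i h \<tau> N m \<le> \<theta> * 1" using assms(6) by (intro mult_left_mono) auto
            then show ?thesis using 2(2) by simp
          qed
        qed
      qed
      obtain y where yD: "y \<in> D" and yl: "y < Max ?A" using cInf_lessD[OF _ gtA] oneD by blast
      have BdD: "Bd_hat h \<tau> N l \<epsilon>0 \<theta> t \<in> dur_bounds h \<tau> N"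
        using D_up[of y h \<tau> N "Max ?A"] yD yl le1 bdv unfolding D_def by simp
      obtain k' where k': "j \<le> k'" "valid_idx N k'"
        and bfv: "Bf_hat h N l \<epsilon>0 \<theta> t = Max ({\<epsilon>0} \<union> (\<lambda>i. Bf_i h i / \<theta>) ` {l..k'})"
        using Bf_hat_val[OF d finK vj lj hjt l1] by blast
      let ?B = "{\<epsilon>0} \<union> (\<lambda>i. Bf_i h i / \<theta>) ` {l..k'}"
      have fB: "finite ?B" by simp
      have "\<epsilon>0 \<le> Max ?B" by (intro Max_ge fB) auto
      moreover have "Bf_i h j / \<theta> \<le> Max ?B" using lj k'(1) by (intro Max_ge fB) auto
      ultimately have gtB: "Inf F < Max ?B" using gj by linarith
      obtain z where zF: "z \<in> F" and zl: "z < Max ?B" using cInf_lessD[OF Fne gtB] by blast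
      have BfF: "Bf_hat h N l \<epsilon>0 \<theta> t \<in> freq_bounds h N"
        using F_up[of z h N "Max ?B"] zF zl bfv unfolding F_def by simp
      show "Bd_hat h \<tau> N l \<epsilon>0 \<theta> t \<in> dur_bounds h \<tau> N \<and> Bf_hat h N l \<epsilon>0 \<theta> t \<in> freq_bounds h N"
        using BdD BfF by simp
    qed
  qed
qed

end
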